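(* Let $G$ be a finite graph and let $v$ be a vertex of $G$ of degree at most five such that there is no $v$-immersion of $K_6$ into $G$. If $G-v$ has a proper $5$-coloring, then so does $G$.
   Context: Graphs are finite and simple. An immersion of $G'$ into $G$ is a function $\alpha$ on $V(G')\cup E(G')$ such that: $\alpha$ restricted to $V(G')$ is an injection into $V(G)$; for each edge $e=uw$ of $G'$, $\alpha(e)$ is a path in $G$ with ends $\alpha(u)$ and $\alpha(w)$; and for distinct edges $e,f$ of $G'$ the paths $\alpha(e),\alpha(f)$ are edge-disjoint. It is essential if moreover $\alpha(e)$ and $\alpha(f)$ are vertex-disjoint whenever $e$ and $f$ are non-adjacent edges. For a vertex $v$ of $G$, a $v$-immersion of $G'$ into $G$ is an essential immersion $\alpha$ of $G'$ into $G$ such that $v=\alpha(u)$ for some vertex $u$ of $G'$ and $\alpha(e)$ is a single-edge path for every edge $e$ of $G'$ incident with $u$. A proper coloring assigns colors to vertices so that adjacent vertices receive distinct colors. *)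

theory Defs
  imports Main
begin

definition simple_graph :: "'a set \<Rightarrow> 'a set set \<Rightarrow> bool" where
  "simple_graph V E \<longleftrightarrow> finite V \<and> (\<forall>e\<in>E. e \<subseteq> V \<and> card e = 2)"

definition degree :: "'a set set \<Rightarrow> 'a \<Rightarrow> nat" where
  "degree E v = card {e\<in>E. v \<in> e}"

definition del_vertex_V :: "'a set \<Rightarrow> 'a \<Rightarrow> 'a set" where
  "del_vertex_V V v = V - {v}"
definition del_vertex_E :: "'a set set \<Rightarrow> 'a \<Rightarrow> 'a set set" where
  "del_vertex_E E v = {e\<in>E. v \<notin> e}"

definition proper_coloring :: "'a set \<Rightarrow> 'a set set \<Rightarrow> nat \<Rightarrow> ('a \<Rightarrow> nat) \<Rightarrow> bool" where
  "proper_coloring V E k c \<longleftrightarrow> (\<forall>x\<in>V. c x < k) \<and> (\<forall>x y. {x, y} \<in> E \<longrightarrow> c x \<noteq> c y)"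

definition colorable :: "'a set \<Rightarrow> 'a set set \<Rightarrow> nat \<Rightarrow> bool" where
  "colorable V E k \<longleftrightarrow> (\<exists>c. proper_coloring V E k c)"

definition is_path :: "'a set \<Rightarrow> 'a set set \<Rightarrow> 'a list \<Rightarrow> bool" where
  "is_path V E p \<longleftrightarrow> p \<noteq> [] \<and> distinct p \<and> set p \<subseteq> V \<and>
     (\<forall>i. Suc i < length p \<longrightarrow> {p ! i, p ! Suc i} \<in> E)"

definition path_edges :: "'a list \<Rightarrow> 'a set set" where
  "path_edges p = {{p ! i, p ! Suc i} | i. Suc i < length p}"

definition immersion ::
  "'b set \<Rightarrow> 'b set set \<Rightarrow> 'a set \<Rightarrow> 'a set set \<Rightarrow> ('b \<Rightarrow> 'a) \<Rightarrow> ('b set \<Rightarrow> 'a list) \<Rightarrow> bool" where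
  "immersion V' E' V E f P \<longleftrightarrow>
     inj_on f V' \<and> f ` V' \<subseteq> V \<and>
     (\<forall>e\<in>E'. is_path V E (P e) \<and> {hd (P e), last (P e)} = f ` e) \<and>
     (\<forall>e\<in>E'. \<forall>e'\<in>E'. e \<noteq> e' \<longrightarrow> path_edges (P e) \<inter> path_edges (P e') = {})"

definition essential_immersion ::
  "'b set \<Rightarrow> 'b set set \<Rightarrow> 'a set \<Rightarrow> 'a set set \<Rightarrow> ('b \<Rightarrow> 'a) \<Rightarrow> ('b set \<Rightarrow> 'a list) \<Rightarrow> bool" where
  "essential_immersion V' E' V E f P \<longleftrightarrow>
     immersion V' E' V E f P \<and>
     (\<forall>e\<in>E'. \<forall>e'\<in>E'. e \<inter> e' = {} \<longrightarrow> set (P e) \<inter> set (P e') = {})"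

definition v_immersion ::
  "'a \<Rightarrow> 'b set \<Rightarrow> 'b set set \<Rightarrow> 'a set \<Rightarrow> 'a set set \<Rightarrow> ('b \<Rightarrow> 'a) \<Rightarrow> ('b set \<Rightarrow> 'a list) \<Rightarrow> bool" where
  "v_immersion v V' E' V E f P \<longleftrightarrow>
     essential_immersion V' E' V E f P \<and>
     (\<exists>u\<in>V'. f u = v \<and> (\<forall>e\<in>E'. u \<in> e \<longrightarrow> length (P e) = 2))"

definition K_V :: "nat \<Rightarrow> nat set" where
  "K_V n = {0..<n}"
definition K_E :: "nat \<Rightarrow> nat set set" where
  "K_E n = {{i, j} | i j. i < n \<and> j < n \<and> i \<noteq> j}"

end

theory Submission
  imports Defs "HOL-Library.Transitive_Closure_Table"
begin

lemma edge_card2: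
  assumes "simple_graph V E" "{x, y} \<in> E"
  shows "x \<noteq> y" "x \<in> V" "y \<in> V"
  using assms unfolding simple_graph_def by (auto simp: card_insert_if split: if_splits)

lemma extend_col:
  assumes sg: "simple_graph V E"
    and pc: "proper_coloring (V - {v}) (del_vertex_E E v) 5 c"
    and a: "a < (5::nat)"
    and nb: "\<forall>u. {v, u} \<in> E \<longrightarrow> c u \<noteq> a"
  shows "colorable V E 5"
proof -
  define c' where "c' = c(v := a)"
  have "proper_coloring V E 5 c'"
    unfolding proper_coloring_def
  proof (intro conjI allI impI ballI)
    fix x assume "x \<in> V" then show "c' x < 5"
      using pc a unfolding c'_def proper_coloring_def by auto
  next
    fix x y assume e: "{x, y} \<in> E"
    have xy: "x \<noteq> y" using edge_card2[OF sg e] by simp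
    show "c' x \<noteq> c' y"
    proof (cases "x = v")
      case True
      then show ?thesis using nb e xy unfolding c'_def by auto
    next
      case False
      show ?thesis
      proof (cases "y = v")
        case True
        then have "{v, x} \<in> E" using e by (simp add: insert_commute)
        then show ?thesis using nb True False unfolding c'_def by auto
      next
        case False2: False
        have "{x, y} \<in> del_vertex_E E v" using e False False2 unfolding del_vertex_E_def by auto
        then show ?thesis using pc False False2 unfolding c'_def proper_coloring_def by auto
      qed
    qed
  qed
  then show ?thesis unfolding colorable_def by blast
qed

lemma kempe:
  assumes sg: "simple_graph V E"
    and pc: "proper_coloring (V - {v}) (del_vertex_E E v) 5 c"
    and ab: "a < (5::nat)" "b < 5" "a \<noteq> b"
    and x: "c x = a"
    and y: "c y = b"
    and R_def: "R = (\<lambda>z1 z2. {z1, z2} \<in> E \<and> z1 \<noteq> v \<and> z2 \<noteq> v \<and> c z1 \<in> {a, b} \<and> c z2 \<in> {a, b})"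
    and nr: "\<not> R\<^sup>*\<^sup>* x y"
  shows "\<exists>c'. proper_coloring (V - {v}) (del_vertex_E E v) 5 c' \<and> c' x = b \<and> c' y = b
          \<and> (\<forall>z. c z \<notin> {a, b} \<longrightarrow> c' z = c z)"
proof -
  define S where "S = {z. R\<^sup>*\<^sup>* x z}"
  have Sc: "c z \<in> {a, b}" if "z \<in> S" for z
  proof -
    have "R\<^sup>*\<^sup>* x z" using that S_def by simp
    then show ?thesis
      by (induction rule: rtranclp_induct) (use x R_def in auto)
  qed
  define c' where "c' = (\<lambda>z. if z \<in> S then (if c z = a then b else a) else c z)"
  have xS: "x \<in> S" unfolding S_def by simp
  have yS: "y \<notin> S" unfolding S_def using nr by simp
  have "proper_coloring (V - {v}) (del_vertex_E E v) 5 c'"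
    unfolding proper_coloring_def
  proof (intro conjI allI impI ballI)
    fix z assume "z \<in> V - {v}" then show "c' z < 5"
      using pc ab unfolding c'_def proper_coloring_def by auto
  next
    fix z1 z2 assume e: "{z1, z2} \<in> del_vertex_E E v"
    have e1: "{z1, z2} \<in> E" "z1 \<noteq> v" "z2 \<noteq> v" using e unfolding del_vertex_E_def by auto
    have e2: "{z2, z1} \<in> E" using e1 by (simp add: insert_commute)
    have ne: "c z1 \<noteq> c z2" using pc e unfolding proper_coloring_def by auto
    show "c' z1 \<noteq> c' z2"
    proof (cases "z1 \<in> S")
      case True
      show ?thesis
      proof (cases "z2 \<in> S")
        case True2: True
        then show ?thesis using Sc[OF True] Sc[OF True2] ne True unfolding c'_def by auto
      next
        case False
        have "c z2 \<notin> {a, b}"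
        proof
          assume "c z2 \<in> {a, b}"
          then have "R z1 z2" using R_def e1 Sc[OF True] by auto
          then have "z2 \<in> S" using True unfolding S_def by auto
          then show False using False by simp
        qed
        then show ?thesis using True False unfolding c'_def by auto
      qed
    next
      case False
      show ?thesis
      proof (cases "z2 \<in> S")
        case True2: True
        have "c z1 \<notin> {a, b}"
        proof
          assume "c z1 \<in> {a, b}"
          then have "R z2 z1" using R_def e1 e2 Sc[OF True2] by auto
          then have "z1 \<in> S" using True2 unfolding S_def by auto
          then show False using False by simp
        qed
        then show ?thesis using True2 False unfolding c'_def by auto
      next
        case False2: False
        then show ?thesis using False ne unfolding c'_def by auto
      qed
    qed
  qed
  moreover have "c' x = b" using xS x unfolding c'_def by simp
  moreover have "c' y = b" using yS y unfolding c'_def by simp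
  moreover have "\<forall>z. c z \<notin> {a, b} \<longrightarrow> c' z = c z" using Sc unfolding c'_def by auto
  ultimately show ?thesis by blast
qed


definition cp :: "'a set \<Rightarrow> 'a set set \<Rightarrow> 'a \<Rightarrow> ('a \<Rightarrow> nat) \<Rightarrow> (nat \<Rightarrow> 'a) \<Rightarrow> nat \<Rightarrow> nat \<Rightarrow> 'a list \<Rightarrow> bool" where
  "cp V E v c w a b p \<longleftrightarrow> p \<noteq> [] \<and> distinct p \<and> hd p = w a \<and> last p = w b \<and>
     (\<forall>z\<in>set p. z \<in> V \<and> z \<noteq> v \<and> c z \<in> {a, b}) \<and>
     (\<forall>i. Suc i < length p \<longrightarrow> {p ! i, p ! Suc i} \<in> E)"

lemma edge_facts:
  assumes sg: "simple_graph V E" and vV: "v \<in> V"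
    and wE: "\<forall>a<5. {v, w a} \<in> E"
    and wc: "\<forall>a<5. c (w a) = (a::nat)"
    and prp: "\<forall>x y. {x, y} \<in> E \<longrightarrow> x \<noteq> v \<longrightarrow> y \<noteq> v \<longrightarrow> c x \<noteq> c y"
    and pth: "\<forall>a b. a < b \<longrightarrow> b < 5 \<longrightarrow> cp V E v c w a b (pth a b)"
    and f_def: "f = (\<lambda>k. if k = 0 then v else w (k - 1))"
    and P_def: "P = (\<lambda>e. if 0 \<in> e then [v, w (Max e - 1)] else pth (Min e - 1) (Max e - 1))"
    and col_def: "col = (\<lambda>z. if z = v then 5 else c z)"
    and g_def: "g = (\<lambda>k::nat. if k = 0 then 5 else k - 1)"
    and ij: "i < j" "j < 6"
    and e: "e = {i, j}"
  shows "is_path V E (P e) \<and> {hd (P e), last (P e)} = f ` e \<and> (\<forall>z\<in>set (P e). col z \<in> g ` e)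
     \<and> (\<forall>ed\<in>path_edges (P e). col ` ed = g ` e) \<and> (0 \<in> e \<longrightarrow> length (P e) = 2)"
proof -
  have Min: "Min e = i" and Max: "Max e = j" using e ij by auto
  show ?thesis
  proof (cases "i = 0")
    case True
    have Pe: "P e = [v, w (j - 1)]" using P_def Max e True by simp
    have j1: "j - 1 < 5" using ij by simp
    have E1: "{v, w (j - 1)} \<in> E" using wE j1 by simp
    have ne: "v \<noteq> w (j - 1)" "w (j - 1) \<in> V" using edge_card2[OF sg E1] by auto
    have pe: "path_edges (P e) = {{v, w (j - 1)}}" unfolding Pe path_edges_def by auto
    have "is_path V E (P e)" unfolding is_path_def Pe using ne vV E1
      by (auto simp: less_Suc_eq nth_Cons split: nat.splits)
    moreover have "{hd (P e), last (P e)} = f ` e" using Pe f_def e True ij by auto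
    moreover have "\<forall>z\<in>set (P e). col z \<in> g ` e" using Pe col_def g_def e True ne wc j1 ij
      by auto
    moreover have "\<forall>ed\<in>path_edges (P e). col ` ed = g ` e" using pe col_def g_def e True ne wc j1 ij
      by auto
    ultimately show ?thesis using Pe by simp
  next
    case False
    define a where "a = i - 1"
    define b where "b = j - 1"
    have ab: "a < b" "b < 5" using False ij a_def b_def by auto
    have n0: "0 \<notin> e" using e False ij by auto
    have Pe: "P e = pth a b" unfolding P_def using n0 by (simp add: Min Max a_def b_def)
    have C: "cp V E v c w a b (P e)" using pth ab Pe by simp
    have gE: "g ` e = {a, b}" using g_def e False ij a_def b_def by auto
    have ed: "col ` {P e ! k, P e ! Suc k} = {a, b}" if "Suc k < length (P e)" for k
    proof -
      have m: "P e ! k \<in> set (P e)" "P e ! Suc k \<in> set (P e)" using that by auto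
      have "{P e ! k, P e ! Suc k} \<in> E" using C that unfolding cp_def by blast
      then have "c (P e ! k) \<noteq> c (P e ! Suc k)" using prp C m unfolding cp_def by blast
      moreover have "c (P e ! k) \<in> {a, b}" "c (P e ! Suc k) \<in> {a, b}" "P e ! k \<noteq> v" "P e ! Suc k \<noteq> v"
        using C m unfolding cp_def by auto
      ultimately show ?thesis using col_def ab by auto
    qed
    have "is_path V E (P e)" using C unfolding cp_def is_path_def by auto
    moreover have "{hd (P e), last (P e)} = f ` e" using C f_def e False ij a_def b_def
      unfolding cp_def by auto
    moreover have "\<forall>z\<in>set (P e). col z \<in> g ` e" using C gE col_def unfolding cp_def by auto
    moreover have "\<forall>ed\<in>path_edges (P e). col ` ed = g ` e" using ed gE unfolding path_edges_def by auto
    ultimately show ?thesis using e False ij by auto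
  qed
qed


lemma build_imm:
  assumes sg: "simple_graph V E" and vV: "v \<in> V"
    and wE: "\<forall>a<5. {v, w a} \<in> E"
    and wc: "\<forall>a<5. c (w a) = (a::nat)"
    and prp: "\<forall>x y. {x, y} \<in> E \<longrightarrow> x \<noteq> v \<longrightarrow> y \<noteq> v \<longrightarrow> c x \<noteq> c y"
    and pth: "\<forall>a b. a < b \<longrightarrow> b < 5 \<longrightarrow> cp V E v c w a b (pth a b)"
  shows "\<exists>f P. v_immersion v (K_V 6) (K_E 6) V E f P"
proof -
  define f where "f = (\<lambda>k::nat. if k = 0 then v else w (k - 1))"
  define P where "P = (\<lambda>e::nat set. if 0 \<in> e then [v, w (Max e - 1)] else pth (Min e - 1) (Max e - 1))"
  define col where "col = (\<lambda>z. if z = v then 5 else c z)"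
  define g where "g = (\<lambda>k::nat. if k = 0 then 5 else k - 1)"
  have EF: "is_path V E (P e) \<and> {hd (P e), last (P e)} = f ` e \<and> (\<forall>z\<in>set (P e). col z \<in> g ` e)
     \<and> (\<forall>ed\<in>path_edges (P e). col ` ed = g ` e) \<and> (0 \<in> e \<longrightarrow> length (P e) = 2)"
    if eK: "e \<in> K_E 6" for e
  proof -
    obtain i j where ij: "e = {i, j}" "i < 6" "j < 6" "i \<noteq> j" using eK unfolding K_E_def by blast
    show ?thesis
    proof (cases "i < j")
      case True
      show ?thesis by (rule edge_facts[OF sg vV wE wc prp pth f_def P_def col_def g_def True ij(3) ij(1)])
    next
      case False
      then have "j < i" using ij by simp
      moreover have "e = {j, i}" using ij by auto
      ultimately show ?thesis by (rule edge_facts[OF sg vV wE wc prp pth f_def P_def col_def g_def _ ij(2)])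
    qed
  qed
  have Ksub: "e \<subseteq> {0..<6}" if "e \<in> K_E 6" for e using that unfolding K_E_def by auto
  have ginj: "inj_on g {0..<6}" unfolding g_def inj_on_def by auto
  have wv: "w a \<noteq> v" "w a \<in> V" if "a < 5" for a
    using edge_card2[OF sg, of v "w a"] wE that by auto
  have finj: "inj_on f (K_V 6)"
    unfolding inj_on_def K_V_def f_def
  proof (intro ballI impI)
    fix x y :: nat assume xy: "x \<in> {0..<6}" "y \<in> {0..<6}"
      "(if x = 0 then v else w (x - 1)) = (if y = 0 then v else w (y - 1))"
    have x5: "x - 1 < 5" "y - 1 < 5" using xy by auto
    have wvx: "w (x - 1) \<noteq> v" "w (y - 1) \<noteq> v" using wv x5 by auto
    show "x = y"
    proof (cases "x = 0"; cases "y = 0")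
      assume "x \<noteq> 0" "y \<noteq> 0"
      then have "c (w (x - 1)) = c (w (y - 1))" using xy by simp
      moreover have "x - 1 < 5" "y - 1 < 5" using xy by auto
      ultimately have "x - 1 = y - 1" using wc by metis
      then show "x = y" using \<open>x \<noteq> 0\<close> \<open>y \<noteq> 0\<close> by simp
    qed (use xy wvx in \<open>auto split: if_splits\<close>)
  qed
  have "immersion (K_V 6) (K_E 6) V E f P"
    unfolding immersion_def
  proof (intro conjI ballI impI)
    show "inj_on f (K_V 6)" by (rule finj)
    show "f ` K_V 6 \<subseteq> V" unfolding K_V_def f_def using vV wv by auto
  next
    fix e assume "e \<in> K_E 6" then show "is_path V E (P e)" using EF by blast
  next
    fix e assume "e \<in> K_E 6" then show "{hd (P e), last (P e)} = f ` e" using EF by blast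
  next
    fix e e' assume ee: "e \<in> K_E 6" "e' \<in> K_E 6" "e \<noteq> e'"
    show "path_edges (P e) \<inter> path_edges (P e') = {}"
    proof (rule ccontr)
      assume "path_edges (P e) \<inter> path_edges (P e') \<noteq> {}"
      then obtain ed where ed: "ed \<in> path_edges (P e)" "ed \<in> path_edges (P e')" by blast
      have "col ` ed = g ` e" using EF[OF ee(1)] ed(1) by blast
      moreover have "col ` ed = g ` e'" using EF[OF ee(2)] ed(2) by blast
      ultimately have "g ` e = g ` e'" by simp
      then have "e = e'" using inj_on_image_eq_iff[OF ginj Ksub Ksub] ee by blast
      then show False using ee by simp
    qed
  qed
  moreover have "\<forall>e\<in>K_E 6. \<forall>e'\<in>K_E 6. e \<inter> e' = {} \<longrightarrow> set (P e) \<inter> set (P e') = {}"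
  proof (intro ballI impI)
    fix e e' assume ee: "e \<in> K_E 6" "e' \<in> K_E 6" "e \<inter> e' = {}"
    have "g ` e \<inter> g ` e' = {}" using inj_on_image_Int[OF ginj Ksub[OF ee(1)] Ksub[OF ee(2)]] ee(3) by simp
    show "set (P e) \<inter> set (P e') = {}"
    proof (rule ccontr)
      assume "set (P e) \<inter> set (P e') \<noteq> {}"
      then obtain z where z: "z \<in> set (P e)" "z \<in> set (P e')" by blast
      have "col z \<in> g ` e" using EF[OF ee(1)] z(1) by blast
      moreover have "col z \<in> g ` e'" using EF[OF ee(2)] z(2) by blast
      ultimately show False using \<open>g ` e \<inter> g ` e' = {}\<close> by blast
    qed
  qed
  ultimately have "essential_immersion (K_V 6) (K_E 6) V E f P" unfolding essential_immersion_def by blast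
  moreover have "\<exists>u\<in>K_V 6. f u = v \<and> (\<forall>e\<in>K_E 6. u \<in> e \<longrightarrow> length (P e) = 2)"
    using EF unfolding K_V_def f_def by (intro bexI[of _ 0]) auto
  ultimately show ?thesis unfolding v_immersion_def by blast
qed


theorem lemma2p3:
  fixes V :: "'a set" and E :: "'a set set" and v :: 'a
  assumes "simple_graph V E"
    and "v \<in> V"
    and "degree E v \<le> 5"
    and "\<not> (\<exists>f P. v_immersion v (K_V 6) (K_E 6) V E f P)"
    and "colorable (del_vertex_V V v) (del_vertex_E E v) 5"
  shows "colorable V E 5"
proof (rule ccontr)
  assume nc: "\<not> colorable V E 5"
  note sg = assms(1)
  obtain c where pc: "proper_coloring (V - {v}) (del_vertex_E E v) 5 c"
    using assms(5) unfolding colorable_def del_vertex_V_def by blast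
  define N where "N = {u. {v, u} \<in> E}"
  have Nv: "u \<noteq> v" "u \<in> V" if "u \<in> N" for u
    using edge_card2[OF sg, of v u] that unfolding N_def by auto
  have cN5: "c u < 5" if "u \<in> N" for u using pc Nv[OF that] unfolding proper_coloring_def by auto
  have prp: "\<forall>x y. {x, y} \<in> E \<longrightarrow> x \<noteq> v \<longrightarrow> y \<noteq> v \<longrightarrow> c x \<noteq> c y"
    using pc unfolding proper_coloring_def del_vertex_E_def by auto
  have allc: "\<exists>u\<in>N. c u = a" if "a < 5" for a
  proof (rule ccontr)
    assume "\<not> (\<exists>u\<in>N. c u = a)"
    then have "\<forall>u. {v, u} \<in> E \<longrightarrow> c u \<noteq> a" unfolding N_def by auto
    then show False using extend_col[OF sg pc that] nc by blast
  qed
  have finE: "finite E" using sg unfolding simple_graph_def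
    by (meson Pow_iff finite_Pow_iff rev_finite_subset subsetI)
  have finN: "finite N" using Nv sg unfolding simple_graph_def by (meson rev_finite_subset subsetI)
  have cardN: "card N \<le> 5"
  proof -
    have "card N \<le> card {e\<in>E. v \<in> e}"
      by (rule card_inj_on_le[where f = "\<lambda>u. {v, u}"]) (auto simp: inj_on_def N_def doubleton_eq_iff finE)
    then show ?thesis using assms(3) unfolding degree_def by simp
  qed
  define w where "w a = (SOME u. u \<in> N \<and> c u = a)" for a
  have wN: "w a \<in> N \<and> c (w a) = a" if "a < 5" for a
    unfolding w_def by (rule someI_ex) (use allc[OF that] in blast)
  have "{0..<5} \<subseteq> c ` N"
  proof
    fix x assume "x \<in> {0..<(5::nat)}"
    then have "w x \<in> N" "c (w x) = x" using wN by auto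
    then show "x \<in> c ` N" by (metis image_eqI)
  qed
  then have "5 \<le> card (c ` N)" using card_mono[OF finite_imageI[OF finN]] by fastforce
  moreover have "card (c ` N) \<le> card N" using card_image_le[OF finN] by simp
  ultimately have "card (c ` N) = card N" using cardN by simp
  then have injc: "inj_on c N" using eq_card_imp_inj_on[OF finN] by blast
  have uniq: "u = w a" if "u \<in> N" "c u = a" "a < 5" for u a
    using injc wN[OF that(3)] that unfolding inj_on_def by auto
  have wE: "\<forall>a<5. {v, w a} \<in> E" using wN unfolding N_def by auto
  have wc: "\<forall>a<5. c (w a) = a" using wN by auto
  have paths: "\<exists>p. cp V E v c w a b p" if ab: "a < b" "b < 5" for a b
  proof -
    define R where "R = (\<lambda>z1 z2. {z1, z2} \<in> E \<and> z1 \<noteq> v \<and> z2 \<noteq> v \<and> c z1 \<in> {a, b} \<and> c z2 \<in> {a, b})"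
    have a5: "a < 5" using ab by simp
    have rr: "R\<^sup>*\<^sup>* (w a) (w b)"
    proof (rule ccontr)
      assume "\<not> R\<^sup>*\<^sup>* (w a) (w b)"
      from kempe[OF sg pc a5 ab(2) _ wc[rule_format, OF a5] wc[rule_format, OF ab(2)] R_def this]
      obtain c' where c': "proper_coloring (V - {v}) (del_vertex_E E v) 5 c'" "c' (w a) = b" "c' (w b) = b"
        "\<forall>z. c z \<notin> {a, b} \<longrightarrow> c' z = c z" using ab by auto
      have "\<forall>u. {v, u} \<in> E \<longrightarrow> c' u \<noteq> a"
      proof (intro allI impI)
        fix u assume "{v, u} \<in> E"
        then have uN: "u \<in> N" unfolding N_def by simp
        show "c' u \<noteq> a"
        proof (cases "c u = a")
          case True then show ?thesis using uniq[OF uN True a5] c' ab by simp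
        next
          case False
          show ?thesis
          proof (cases "c u = b")
            case True then show ?thesis using uniq[OF uN True ab(2)] c' ab by simp
          next
            case False2: False
            then show ?thesis using False c' by auto
          qed
        qed
      qed
      then show False using extend_col[OF sg c'(1) a5] nc by blast
    qed
    then obtain xs where "rtrancl_path R (w a) xs (w b)" using rtranclp_eq_rtrancl_path by metis
    then obtain xs' where xs': "rtrancl_path R (w a) xs' (w b)" "distinct (w a # xs')"
      using rtrancl_path_distinct by metis
    have wab: "w a \<noteq> w b"
    proof
      assume "w a = w b"
      then have "c (w a) = c (w b)" by simp
      then show False using wc a5 ab by auto
    qed
    have ne: "xs' \<noteq> []"
    proof
      assume "xs' = []"
      then show False using xs'(1) wab by (auto elim: rtrancl_path.cases)
    qed
    have lst: "last (w a # xs') = w b" using rtrancl_path_last[OF xs'(1) ne] ne by simp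
    have wa: "w a \<in> V" "w a \<noteq> v" using Nv wN a5 by auto
    have inner: "z \<in> V \<and> z \<noteq> v \<and> c z \<in> {a, b}" if zs: "z \<in> set xs'" for z
    proof -
      obtain y where "R y z" using rtrancl_path_Range[OF xs'(1) zs] by blast
      then show ?thesis unfolding R_def using edge_card2[OF sg, of y z] by auto
    qed
    have edges: "{(w a # xs') ! i, (w a # xs') ! Suc i} \<in> E" if "Suc i < length (w a # xs')" for i
    proof -
      have "R ((w a # xs') ! i) (xs' ! i)" using rtrancl_path_nth[OF xs'(1)] that by simp
      then show ?thesis unfolding R_def by simp
    qed
    have "cp V E v c w a b (w a # xs')"
      unfolding cp_def using xs'(2) lst wa inner edges wc a5 by auto
    then show ?thesis by blast
  qed
  define pth where "pth a b = (SOME p. cp V E v c w a b p)" for a b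
  have pth: "\<forall>a b. a < b \<longrightarrow> b < 5 \<longrightarrow> cp V E v c w a b (pth a b)"
    unfolding pth_def using paths by (metis someI_ex)
  show False using build_imm[OF sg assms(2) wE wc prp pth] assms(4) by blast
qed

end
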